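(* Let $n\ge1$ and $1\le k\le n$. Let $\alpha_k$ be the number of pairs $(P,i)$ where $P=(a_0,a_1,\dots,a_{2n})$ is a Dyck path of length $2n$ (i.e., $a_0=a_{2n}=0$, $a_j\ge0$ and $|a_j-a_{j-1}|=1$ for all $j$) and $0\le i\le 2n-1$ is an index with $a_i=k$ and $a_{i+1}=k-1$. Then \[ \alpha_k=\binom{2n}{n-k}-\binom{2n}{n-k-1}, \] with the convention $\binom{2n}{-1}=0$. *)

theory Defs
  imports Main
begin

definition dyck_path :: "nat \<Rightarrow> int list \<Rightarrow> bool" where
  "dyck_path n P \<longleftrightarrow> length P = 2*n + 1 \<and> P ! 0 = 0 \<and> P ! (2*n) = 0
     \<and> (\<forall>j \<le> 2*n. P ! j \<ge> 0)
     \<and> (\<forall>j. 1 \<le> j \<and> j \<le> 2*n \<longrightarrow> \<bar>P ! j - P ! (j-1)\<bar> = 1)"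

definition alpha :: "nat \<Rightarrow> nat \<Rightarrow> nat" where
  "alpha n k = card {(P, i). dyck_path n P \<and> i \<le> 2*n - 1
                         \<and> P ! i = int k \<and> P ! (i+1) = int k - 1}"

definition binom_int :: "nat \<Rightarrow> int \<Rightarrow> int" where
  "binom_int m j = (if j < 0 then 0 else int (m choose nat j))"

end

theory Submission
  imports Defs
begin

definition paths :: "nat \<Rightarrow> int list set" where
  "paths m = {P. length P = m+1 \<and> P!0 = 0 \<and> (\<forall>j\<le>m. P!j \<ge> 0)
     \<and> (\<forall>j. 1 \<le> j \<and> j \<le> m \<longrightarrow> \<bar>P!j - P!(j-1)\<bar> = 1)}"

definition NS :: "nat \<Rightarrow> int \<Rightarrow> int list set" where
  "NS m b = {P \<in> paths m. P!m = b}"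

definition WS :: "nat \<Rightarrow> int \<Rightarrow> int \<Rightarrow> (int list \<times> nat) set" where
  "WS m b K = {(P,i). P \<in> NS m b \<and> i < m \<and> P!i = K \<and> P!(i+1) = K-1}"

lemma nth_snoc: "length Q = m+1 \<Longrightarrow> j \<le> Suc m \<Longrightarrow> (Q@[b])!j = (if j \<le> m then Q!j else b)"
  by (auto simp: nth_append)

lemma NS_neg: "b < 0 \<Longrightarrow> NS m b = {}"
  unfolding NS_def paths_def by force

lemma NS_0: "NS 0 b = (if b = 0 then {[0]} else {})"
proof -
  have "P = [0]" if "length P = 1" "P!0 = 0" for P :: "int list"
    using that by (cases P) auto
  then show ?thesis unfolding NS_def paths_def by auto
qed

lemma NS_Suc:
  assumes "b \<ge> 0"
  shows "NS (Suc m) b = (\<lambda>Q. Q@[b]) ` (NS m (b-1) \<union> NS m (b+1))"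
proof (rule set_eqI, rule iffI)
  fix P assume P: "P \<in> NS (Suc m) b"
  hence len: "length P = m+2" and P0: "P!0 = 0" and nn: "\<forall>j\<le>Suc m. P!j \<ge> 0"
    and st: "\<forall>j. 1 \<le> j \<and> j \<le> Suc m \<longrightarrow> \<bar>P!j - P!(j-1)\<bar> = 1" and Pe: "P!(Suc m) = b"
    unfolding NS_def paths_def by auto
  define Q where "Q = butlast P"
  have lq: "length Q = m+1" using len by (simp add: Q_def)
  have Qn: "\<And>j. j \<le> m \<Longrightarrow> Q!j = P!j" using len by (simp add: Q_def nth_butlast)
  have "P \<noteq> []" using len by auto
  hence PQ: "P = Q @ [b]" using len Pe
    by (metis Q_def append_butlast_last_id last_conv_nth add_2_eq_Suc' diff_Suc_1)
  have "\<bar>P!(Suc m) - P!m\<bar> = 1" using st by force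
  hence "Q!m = b-1 \<or> Q!m = b+1" using Pe Qn[of m] by auto
  moreover have "Q \<in> paths m" unfolding paths_def using lq Qn P0 nn st
    by (auto simp: Qn)
  ultimately have "Q \<in> NS m (b-1) \<union> NS m (b+1)" unfolding NS_def by auto
  thus "P \<in> (\<lambda>Q. Q@[b]) ` (NS m (b-1) \<union> NS m (b+1))" using PQ by auto
next
  fix P assume "P \<in> (\<lambda>Q. Q@[b]) ` (NS m (b-1) \<union> NS m (b+1))"
  then obtain Q c where PQ: "P = Q@[b]" and Q: "Q \<in> paths m" and Qe: "Q!m = c"
    and c: "c = b-1 \<or> c = b+1" unfolding NS_def by auto
  have lq: "length Q = m+1" and Q0: "Q!0 = 0" and nn: "\<forall>j\<le>m. Q!j \<ge> 0"
    and st: "\<forall>j. 1 \<le> j \<and> j \<le> m \<longrightarrow> \<bar>Q!j - Q!(j-1)\<bar> = 1" using Q unfolding paths_def by auto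
  have len: "length P = Suc m + 1" using PQ lq by simp
  have P0: "P!0 = 0" using PQ lq Q0 by (simp add: nth_append)
  have nnP: "\<forall>j\<le>Suc m. P!j \<ge> 0"
  proof (intro allI impI)
    fix j assume "j \<le> Suc m"
    thus "P!j \<ge> 0" using nth_snoc[OF lq, of j b] PQ nn assms by auto
  qed
  have stP: "\<forall>j. 1 \<le> j \<and> j \<le> Suc m \<longrightarrow> \<bar>P!j - P!(j-1)\<bar> = 1"
  proof (intro allI impI)
    fix j assume j: "1 \<le> j \<and> j \<le> Suc m"
    show "\<bar>P!j - P!(j-1)\<bar> = 1"
    proof (cases "j \<le> m")
      case True
      thus ?thesis using nth_snoc[OF lq, of j b] nth_snoc[OF lq, of "j-1" b] PQ st j by auto
    next
      case False
      hence "j = Suc m" using j by auto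
      thus ?thesis using nth_snoc[OF lq, of j b] nth_snoc[OF lq, of "j-1" b] PQ Qe c by auto
    qed
  qed
  have Pe: "P!(Suc m) = b" using PQ lq by (simp add: nth_append)
  show "P \<in> NS (Suc m) b" unfolding NS_def paths_def using len P0 nnP stP Pe by auto
qed

lemma finite_NS: "finite (NS m b)"
proof (induction m arbitrary: b)
  case 0 thus ?case by (simp add: NS_0)
next
  case (Suc m)
  show ?case
  proof (cases "b < 0")
    case True thus ?thesis by (simp add: NS_neg)
  next
    case False thus ?thesis using Suc by (simp add: NS_Suc)
  qed
qed

lemma card_NS_Suc:
  assumes "b \<ge> 0"
  shows "card (NS (Suc m) b) = card (NS m (b-1)) + card (NS m (b+1))"
proof -
  have inj: "inj_on (\<lambda>Q. Q@[b]) (NS m (b-1) \<union> NS m (b+1))" by (auto simp: inj_on_def)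
  have dj: "NS m (b-1) \<inter> NS m (b+1) = {}" unfolding NS_def by auto
  show ?thesis unfolding NS_Suc[OF assms] card_image[OF inj]
    by (rule card_Un_disjoint[OF finite_NS finite_NS dj])
qed


lemma WS_neg: "b < 0 \<Longrightarrow> WS m b K = {}"
  unfolding WS_def by (simp add: NS_neg)

lemma finite_WS: "finite (WS m b K)"
proof -
  have "WS m b K \<subseteq> NS m b \<times> {..<m}" unfolding WS_def by auto
  thus ?thesis using finite_NS by (meson finite_SigmaI finite_lessThan finite_subset)
qed

lemma WS_Suc:
  assumes "b \<ge> 0"
  shows "WS (Suc m) b K = (\<lambda>(Q,i). (Q@[b], i)) ` (WS m (b-1) K \<union> WS m (b+1) K)
     \<union> (if b = K-1 then (\<lambda>Q. (Q@[b], m)) ` NS m K else {})"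
proof (rule set_eqI, rule iffI)
  fix x assume x: "x \<in> WS (Suc m) b K"
  obtain P i where xe: "x = (P,i)" by fastforce
  have P: "P \<in> NS (Suc m) b" and i: "i < Suc m" and Pi: "P!i = K" and Pi1: "P!(i+1) = K-1"
    using x xe unfolding WS_def by auto
  from P obtain Q where PQ: "P = Q@[b]" and Q: "Q \<in> NS m (b-1) \<union> NS m (b+1)"
    unfolding NS_Suc[OF assms] by auto
  have lq: "length Q = m+1" using Q unfolding NS_def paths_def by auto
  show "x \<in> (\<lambda>(Q,i). (Q@[b], i)) ` (WS m (b-1) K \<union> WS m (b+1) K)
     \<union> (if b = K-1 then (\<lambda>Q. (Q@[b], m)) ` NS m K else {})"
  proof (cases "i < m")
    case True
    have "Q!i = K" "Q!(i+1) = K-1" using Pi Pi1 PQ True nth_snoc[OF lq, of i b] nth_snoc[OF lq, of "i+1" b]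
      by auto
    hence "(Q,i) \<in> WS m (b-1) K \<union> WS m (b+1) K" using Q True unfolding WS_def by auto
    thus ?thesis using xe PQ by force
  next
    case False
    hence im: "i = m" using i by auto
    have "Q!m = K" using Pi PQ im nth_snoc[OF lq, of m b] by auto
    moreover have "b = K-1" using Pi1 PQ im nth_snoc[OF lq, of "Suc m" b] by auto
    ultimately have "Q \<in> NS m K" using Q unfolding NS_def by auto
    thus ?thesis using xe PQ im \<open>b = K-1\<close> by auto
  qed
next
  fix x assume x: "x \<in> (\<lambda>(Q,i). (Q@[b], i)) ` (WS m (b-1) K \<union> WS m (b+1) K)
     \<union> (if b = K-1 then (\<lambda>Q. (Q@[b], m)) ` NS m K else {})"
  show "x \<in> WS (Suc m) b K"
  proof (cases "x \<in> (\<lambda>(Q,i). (Q@[b], i)) ` (WS m (b-1) K \<union> WS m (b+1) K)")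
    case True
    then obtain Q i where xe: "x = (Q@[b], i)" and Qi: "(Q,i) \<in> WS m (b-1) K \<union> WS m (b+1) K" by auto
    have Q: "Q \<in> NS m (b-1) \<union> NS m (b+1)" and i: "i < m" and "Q!i = K" "Q!(i+1) = K-1"
      using Qi unfolding WS_def by auto
    have lq: "length Q = m+1" using Q unfolding NS_def paths_def by auto
    have "(Q@[b]) \<in> NS (Suc m) b" unfolding NS_Suc[OF assms] using Q by auto
    moreover have "(Q@[b])!i = K" "(Q@[b])!(i+1) = K-1"
      using \<open>Q!i = K\<close> \<open>Q!(i+1) = K-1\<close> i nth_snoc[OF lq, of i b] nth_snoc[OF lq, of "i+1" b] by auto
    ultimately show ?thesis using xe i unfolding WS_def by auto
  next
    case False
    hence b: "b = K-1" and "x \<in> (\<lambda>Q. (Q@[b], m)) ` NS m K" using x by (auto split: if_splits)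
    then obtain Q where xe: "x = (Q@[b], m)" and Q: "Q \<in> NS m K" by auto
    have lq: "length Q = m+1" and Qm: "Q!m = K" using Q unfolding NS_def paths_def by auto
    have "(Q@[b]) \<in> NS (Suc m) b" unfolding NS_Suc[OF assms] using Q b by auto
    moreover have "(Q@[b])!m = K" "(Q@[b])!(m+1) = K-1"
      using Qm b nth_snoc[OF lq, of m b] nth_snoc[OF lq, of "m+1" b] by auto
    ultimately show ?thesis using xe unfolding WS_def by auto
  qed
qed

lemma card_WS_Suc:
  assumes "b \<ge> 0"
  shows "card (WS (Suc m) b K) = card (WS m (b-1) K) + card (WS m (b+1) K)
     + (if b = K-1 then card (NS m K) else 0)"
proof -
  have inj: "inj_on (\<lambda>(Q,i). (Q@[b], i)) (WS m (b-1) K \<union> WS m (b+1) K)" by (auto simp: inj_on_def)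
  have inj2: "inj_on (\<lambda>Q. (Q@[b], m)) (NS m K)" by (auto simp: inj_on_def)
  have dj: "WS m (b-1) K \<inter> WS m (b+1) K = {}" unfolding WS_def NS_def by auto
  have c1: "card ((\<lambda>(Q,i). (Q@[b], i)) ` (WS m (b-1) K \<union> WS m (b+1) K))
      = card (WS m (b-1) K) + card (WS m (b+1) K)"
    unfolding card_image[OF inj] by (rule card_Un_disjoint[OF finite_WS finite_WS dj])
  have dj2: "(\<lambda>(Q,i). (Q@[b], i)) ` (WS m (b-1) K \<union> WS m (b+1) K) \<inter> (\<lambda>Q. (Q@[b], m)) ` NS m K = {}"
    unfolding WS_def by auto
  show ?thesis
  proof (cases "b = K-1")
    case True
    have "card (WS (Suc m) b K) = card ((\<lambda>(Q,i). (Q@[b], i)) ` (WS m (b-1) K \<union> WS m (b+1) K))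
       + card ((\<lambda>Q. (Q@[b], m)) ` NS m K)"
      unfolding WS_Suc[OF assms] if_P[OF True]
      by (rule card_Un_disjoint[OF _ _ dj2]) (simp_all add: finite_WS finite_NS)
    thus ?thesis using c1 True card_image[OF inj2] by simp
  next
    case False
    thus ?thesis unfolding WS_Suc[OF assms] using c1 by simp
  qed
qed


definition Nf :: "nat \<Rightarrow> int \<Rightarrow> int" where
  "Nf m d = binom_int m d - binom_int m (d-1)"

definition Wf :: "nat \<Rightarrow> int \<Rightarrow> int \<Rightarrow> int" where
  "Wf m d K = binom_int m (min (int m - d - K) (d-1)) - binom_int m (d-K-1)"

lemma pascal: "j' = j - 1 \<Longrightarrow> binom_int (Suc m) j = binom_int m j + binom_int m j'"
proof -
  assume j': "j' = j - 1"
  show ?thesis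
  proof (cases "j \<le> 0")
    case True
    thus ?thesis using j' by (cases "j = 0") (auto simp: binom_int_def)
  next
    case False
    hence "nat j = Suc (nat (j-1))" by auto
    thus ?thesis using j' False by (simp add: binom_int_def)
  qed
qed

lemma binom_sym: "int m = 2*d - 1 \<Longrightarrow> binom_int m d = binom_int m (d-1)"
proof -
  assume h: "int m = 2*d - 1"
  hence d: "d \<ge> 1" by linarith
  have "nat d \<le> m" using h by linarith
  hence "m choose nat d = m choose (m - nat d)" by (rule binomial_symmetric)
  moreover have "m - nat d = nat (d-1)" using h d by linarith
  ultimately show ?thesis using d by (simp add: binom_int_def)
qed

lemma card_NS: "\<forall>d b. b = int m - 2*d \<longrightarrow> b \<ge> 0 \<longrightarrow> int (card (NS m b)) = Nf m d"
proof (induction m)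
  case 0
  show ?case
  proof (intro allI impI)
    fix d b :: int assume b: "b = int 0 - 2*d" "b \<ge> 0"
    show "int (card (NS 0 b)) = Nf 0 d"
    proof (cases "d = 0")
      case True thus ?thesis using b by (simp add: NS_0 Nf_def binom_int_def)
    next
      case False
      hence "d < 0" "b \<noteq> 0" using b by auto
      thus ?thesis by (simp add: NS_0 Nf_def binom_int_def)
    qed
  qed
next
  case (Suc m)
  show ?case
  proof (intro allI impI)
    fix d b :: int assume b: "b = int (Suc m) - 2*d" "b \<ge> 0"
    have c: "int (card (NS (Suc m) b)) = int (card (NS m (b-1))) + int (card (NS m (b+1)))"
      using card_NS_Suc[OF b(2)] by simp
    have c2: "int (card (NS m (b+1))) = Nf m (d-1)" using Suc.IH[rule_format, of "b+1" "d-1"] b by simp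
    have c1: "int (card (NS m (b-1))) = Nf m d"
    proof (cases "b = 0")
      case True
      hence "NS m (b-1) = {}" by (simp add: NS_neg)
      moreover have "Nf m d = 0" using binom_sym[of m d] True b unfolding Nf_def by simp
      ultimately show ?thesis by simp
    next
      case False thus ?thesis using Suc.IH[rule_format, of "b-1" d] b by simp
    qed
    have "Nf (Suc m) d = Nf m d + Nf m (d-1)"
      unfolding Nf_def using pascal[of "d-1" d m] pascal[of "d-2" "d-1" m] by simp
    thus "int (card (NS (Suc m) b)) = Nf (Suc m) d" using c c1 c2 by simp
  qed
qed


lemma bi_cong: "j = j' \<Longrightarrow> binom_int m j = binom_int m j'" by simp

lemma Wf_rec:
  assumes K: "K \<ge> 1" and b: "b = int m + 1 - 2*d" "b \<ge> 0"
  shows "Wf (Suc m) d K = Wf m d K + Wf m (d-1) K + (if b = K-1 then Nf m (d-1) else 0)"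
proof -
  have w0: "Wf m (d-1) K = binom_int m (min (int m - d + 1 - K) (d-2)) - binom_int m (d-K-2)"
    unfolding Wf_def by (rule arg_cong2[where f="(-)"]; rule bi_cong; simp add: algebra_simps)
  have w1: "Wf (Suc m) d K = binom_int (Suc m) (min (int m - d + 1 - K) (d-1)) - binom_int (Suc m) (d-K-1)"
    unfolding Wf_def by (rule arg_cong2[where f="(-)"]; rule bi_cong; simp add: algebra_simps)
  have p1: "binom_int (Suc m) (d-K-1) = binom_int m (d-K-1) + binom_int m (d-K-2)"
    by (rule pascal) simp
  consider "b \<le> K-2" | "b = K-1" | "b \<ge> K" by linarith
  thus ?thesis
  proof cases
    case 1
    have e1: "min (int m - d + 1 - K) (d-1) = int m - d + 1 - K" using b 1 by simp
    have e2: "min (int m - d - K) (d-1) = int m - d - K" using b 1 by simp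
    have e3: "min (int m - d + 1 - K) (d-2) = int m - d + 1 - K" using b 1 by simp
    have p: "binom_int (Suc m) (int m - d + 1 - K) = binom_int m (int m - d + 1 - K) + binom_int m (int m - d - K)"
      by (rule pascal) simp
    show ?thesis using 1 unfolding w0 w1 unfolding Wf_def e1 e2 e3 p p1 by simp
  next
    case 2
    have e1: "min (int m - d + 1 - K) (d-1) = d-1" using b 2 by simp
    have e2: "min (int m - d - K) (d-1) = d-2" using b 2 by simp
    have e3: "min (int m - d + 1 - K) (d-2) = d-2" using b 2 by simp
    have p: "binom_int (Suc m) (d-1) = binom_int m (d-1) + binom_int m (d-2)"
      by (rule pascal) simp
    have n: "Nf m (d-1) = binom_int m (d-1) - binom_int m (d-2)"
      unfolding Nf_def by (rule arg_cong2[where f="(-)"]; rule bi_cong; simp)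
    show ?thesis using 2 unfolding w0 w1 unfolding Wf_def e1 e2 e3 p p1 n by simp
  next
    case 3
    have e1: "min (int m - d + 1 - K) (d-1) = d-1" using b 3 by simp
    have e2: "min (int m - d - K) (d-1) = d-1" using b 3 by simp
    have e3: "min (int m - d + 1 - K) (d-2) = d-2" using b 3 by simp
    have p: "binom_int (Suc m) (d-1) = binom_int m (d-1) + binom_int m (d-2)"
      by (rule pascal) simp
    have ne: "b \<noteq> K - 1" using 3 by simp
    show ?thesis using ne unfolding w0 w1 unfolding Wf_def e1 e2 e3 p p1 by simp
  qed
qed

lemma card_WS:
  assumes K: "K \<ge> 1"
  shows "\<forall>d b. b = int m - 2*d \<longrightarrow> b \<ge> 0 \<longrightarrow> int (card (WS m b K)) = Wf m d K"
proof (induction m)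
  case 0
  show ?case
  proof (intro allI impI)
    fix d b :: int assume b: "b = int 0 - 2*d" "b \<ge> 0"
    have "WS 0 b K = {}" unfolding WS_def by auto
    moreover have "Wf 0 d K = 0" using b K unfolding Wf_def binom_int_def by simp
    ultimately show "int (card (WS 0 b K)) = Wf 0 d K" by simp
  qed
next
  case (Suc m)
  show ?case
  proof (intro allI impI)
    fix d b :: int assume b: "b = int (Suc m) - 2*d" "b \<ge> 0"
    have c: "int (card (WS (Suc m) b K)) = int (card (WS m (b-1) K)) + int (card (WS m (b+1) K))
       + (if b = K-1 then int (card (NS m K)) else 0)"
      using card_WS_Suc[OF b(2), of m K] by simp
    have c2: "int (card (WS m (b+1) K)) = Wf m (d-1) K" using Suc.IH[rule_format, of "b+1" "d-1"] b by simp
    have c1: "int (card (WS m (b-1) K)) = Wf m d K"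
    proof (cases "b = 0")
      case True
      hence "WS m (b-1) K = {}" by (simp add: WS_neg)
      moreover have "Wf m d K = 0" using True b K unfolding Wf_def
        by (simp add: min_def) (rule bi_cong, simp)
      ultimately show ?thesis by simp
    next
      case False thus ?thesis using Suc.IH[rule_format, of "b-1" d] b by simp
    qed
    have c3: "b = K-1 \<Longrightarrow> int (card (NS m K)) = Nf m (d-1)"
      using card_NS[rule_format, of K m "d-1"] b K by simp
    have "Wf (Suc m) d K = Wf m d K + Wf m (d-1) K + (if b = K-1 then Nf m (d-1) else 0)"
      by (rule Wf_rec[OF K]) (use b in simp_all)
    thus "int (card (WS (Suc m) b K)) = Wf (Suc m) d K" using c c1 c2 c3 by auto
  qed
qed

theorem mainTheorem12:
  fixes n k :: nat
  assumes "n \<ge> 1" and "1 \<le> k" and "k \<le> n"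
  shows "int (alpha n k) = binom_int (2*n) (int n - int k) - binom_int (2*n) (int n - int k - 1)"
proof -
  have set: "{(P, i). dyck_path n P \<and> i \<le> 2*n - 1 \<and> P ! i = int k \<and> P ! (i+1) = int k - 1}
      = WS (2*n) 0 (int k)"
    unfolding WS_def NS_def paths_def dyck_path_def using assms(1) by auto
  have "int (card (WS (2*n) 0 (int k))) = Wf (2*n) (int n) (int k)"
    using card_WS[of "int k" "2*n", rule_format, of 0 "int n"] assms by simp
  moreover have "Wf (2*n) (int n) (int k) = binom_int (2*n) (int n - int k) - binom_int (2*n) (int n - int k - 1)"
    unfolding Wf_def using assms by (intro arg_cong2[where f="(-)"] bi_cong) auto
  ultimately show ?thesis unfolding alpha_def set by simp
qed

end
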